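(* There exist time-inconsistent planning models $(G,w,s,t,\beta)$ in which the number of pairwise distinct costs of feasible $s$-$t$ paths is exponential in the number $n$ of vertices of $G$. (In particular, the difference between the largest and smallest cost of a feasible $s$-$t$ path can be exponential in $n$.)
   Context: A time-inconsistent planning model is a tuple $(G,w,s,t,\beta)$ where $G$ is a finite directed acyclic graph with $n$ vertices, $w:E(G)\to\mathbb{N}$ assigns a cost to each arc, $s,t\in V(G)$ are the start and target vertices, and $\beta\le 1$ is the present-bias parameter. For a vertex $v$ and a $v$-$t$ path $P$ with arcs $e_1,\dots,e_m$ (in order), the perceived cost of $P$ is $\zeta(P)=w(e_1)+\beta\sum_{i=2}^m w(e_i)$, and $\zeta(v)=\min\{\zeta(P): P \text{ a } v\text{-}t \text{ path}\}$. A $v$-$t$ path of perceived cost $\zeta(v)$ is called a perceived path. The agent starts at $s$; at a vertex $v\neq t$ it chooses some perceived $v$-$t$ path and traverses its first arc, and repeats until reaching $t$. An $s$-$t$ path $v_0=s,v_1,\dots,v_m=t$ is feasible if for every $i<m$ the arc $v_iv_{i+1}$ is the first arc of some perceived $v_i$-$t$ path, i.e., the agent may follow it under some way of breaking ties. The (actual) cost of a path is the sum of $w$ over its arcs. *)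

theory Defs
  imports Complex_Main
begin

definition arcs :: "'v list \<Rightarrow> ('v \<times> 'v) list" where
  "arcs xs = zip xs (tl xs)"

definition is_path :: "('v \<times> 'v) set \<Rightarrow> 'v \<Rightarrow> 'v \<Rightarrow> 'v list \<Rightarrow> bool" where
  "is_path E u v xs \<longleftrightarrow> xs \<noteq> [] \<and> hd xs = u \<and> last xs = v \<and> set (arcs xs) \<subseteq> E"

definition path_cost :: "('v \<times> 'v \<Rightarrow> nat) \<Rightarrow> 'v list \<Rightarrow> nat" where
  "path_cost w xs = sum_list (map w (arcs xs))"

definition perceived_cost :: "('v \<times> 'v \<Rightarrow> nat) \<Rightarrow> real \<Rightarrow> 'v list \<Rightarrow> real" where
  "perceived_cost w \<beta> xs =
     (case arcs xs of [] \<Rightarrow> 0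
      | e # es \<Rightarrow> real (w e) + \<beta> * real (sum_list (map w es)))"

definition perceived_path :: "('v \<times> 'v) set \<Rightarrow> ('v \<times> 'v \<Rightarrow> nat) \<Rightarrow> real \<Rightarrow> 'v \<Rightarrow> 'v \<Rightarrow> 'v list \<Rightarrow> bool" where
  "perceived_path E w \<beta> t v P \<longleftrightarrow> is_path E v t P \<and>
     (\<forall>Q. is_path E v t Q \<longrightarrow> perceived_cost w \<beta> P \<le> perceived_cost w \<beta> Q)"

definition feasible_path :: "('v \<times> 'v) set \<Rightarrow> ('v \<times> 'v \<Rightarrow> nat) \<Rightarrow> real \<Rightarrow> 'v \<Rightarrow> 'v \<Rightarrow> 'v list \<Rightarrow> bool" where
  "feasible_path E w \<beta> s t xs \<longleftrightarrow> is_path E s t xs \<and>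
     (\<forall>i. Suc i < length xs \<longrightarrow>
        (\<exists>P. perceived_path E w \<beta> t (xs ! i) P \<and> length P \<ge> 2 \<and> P ! 1 = xs ! Suc i))"

definition planning_model :: "nat \<Rightarrow> (nat \<times> nat) set \<Rightarrow> nat \<Rightarrow> nat \<Rightarrow> real \<Rightarrow> bool" where
  "planning_model n E s t \<beta> \<longleftrightarrow> E \<subseteq> {..<n} \<times> {..<n} \<and> acyclic E \<and>
     s \<in> {..<n} \<and> t \<in> {..<n} \<and> 0 < \<beta> \<and> \<beta> \<le> 1"

end

theory Submission
  imports Defs
begin

definition Ek :: "nat \<Rightarrow> (nat \<times> nat) set" where
  "Ek k = {(a,b). a \<le> 2*k \<and> ((even a \<and> 2 \<le> a \<and> (b+2 = a \<or> b+1 = a)) \<or> (odd a \<and> b+1 = a))}"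

definition wt :: "nat \<times> nat \<Rightarrow> nat" where
  "wt e = (case e of (a,b) \<Rightarrow> if even a then (if b+2 = a then 2^(a div 2 - 1) else 0) else 2^(a div 2 + 1))"

definition phi :: "nat \<Rightarrow> nat" where
  "phi a = (if even a then 2^(a div 2) - 1 else 2^(a div 2 + 1) + 2^(a div 2) - 1)"

fun pth :: "nat \<Rightarrow> nat \<Rightarrow> nat list" where
  "pth 0 m = [0]"
| "pth (Suc i) m = (if 2^i \<le> m then (2*i+2) # (2*i+1) # pth i (m - 2^i) else (2*i+2) # pth i m)"

lemma arcs_simps[simp]: "arcs [] = []" "arcs [x] = []" "arcs (x#y#xs) = (x,y) # arcs (y#xs)"
  by (simp_all add: arcs_def)

lemma is_path_Cons2: "is_path E u v (x#y#xs) \<longleftrightarrow> u = x \<and> (x,y) \<in> E \<and> is_path E y v (y#xs)"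
  by (auto simp: is_path_def)

lemma is_path_single: "is_path E u v [x] \<longleftrightarrow> u = x \<and> v = x"
  by (auto simp: is_path_def)

lemma path_cost_simps[simp]: "path_cost w [x] = 0" "path_cost w (x#y#xs) = w (x,y) + path_cost w (y#xs)"
  by (simp_all add: path_cost_def)

lemma arc_cases:
  assumes "(a,b) \<in> Ek k"
  shows "(\<exists>i. i<k \<and> a = 2*i+2 \<and> b = 2*i) \<or> (\<exists>i. i<k \<and> a = 2*i+2 \<and> b = 2*i+1) \<or> (\<exists>i. i<k \<and> a = 2*i+1 \<and> b = 2*i)"
proof -
  from assms have h: "a \<le> 2*k" "(even a \<and> 2 \<le> a \<and> (b+2 = a \<or> b+1 = a)) \<or> (odd a \<and> b+1 = a)"
    by (auto simp: Ek_def)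
  show ?thesis
  proof (cases "even a")
    case True
    then obtain j where j: "a = 2*j" by blast
    with h True have "j \<ge> 1" by auto
    then obtain i where "j = Suc i" by (cases j) auto
    with j h True show ?thesis by auto
  next
    case False
    then obtain i where "a = 2*i+1" using oddE by blast
    with h False show ?thesis by auto
  qed
qed

lemma wt1[simp]: "wt (Suc (Suc (2*i)), 2*i) = 2^i" by (simp add: wt_def)
lemma wt2[simp]: "wt (Suc (Suc (2*i)), Suc (2*i)) = 0" by (simp add: wt_def)
lemma wt3[simp]: "wt (Suc (2*i), 2*i) = 2 * 2^i" by (simp add: wt_def)
lemma phi1[simp]: "phi (2*i) = 2^i - 1" by (simp add: phi_def)
lemma phi2[simp]: "phi (Suc (2*i)) = 3 * 2^i - 1" by (simp add: phi_def)
lemma phi3[simp]: "phi (Suc (Suc (2*i))) = 2 * 2^i - 1"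
  using phi1[of "Suc i"] by (simp add: algebra_simps)
lemma pos2[simp]: "Suc 0 \<le> 2^i" "Suc 0 \<le> 2 * 2^i" "Suc 0 \<le> 3 * 2^i"
  by (simp_all add: Suc_le_eq)

lemma odd_ne[simp]: "Suc (2*i) \<noteq> 2*j" "2*j \<noteq> Suc (2*i)" by presburger+

lemma arc_pot: "(a,b) \<in> Ek k \<Longrightarrow> phi a \<le> wt (a,b) + phi b"
  using arc_cases[of a b k] by auto

lemma arc_const: "(v,y) \<in> Ek k \<Longrightarrow> (v,y') \<in> Ek k \<Longrightarrow> 2 * wt (v,y) + phi y = 2 * wt (v,y') + phi y'"
  using arc_cases[of v y k] arc_cases[of v y' k] by auto

lemma arc_ub: "(a,b) \<in> Ek k \<Longrightarrow> wt (a,b) + 2^(b+1) \<le> 2^(a+1)"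
proof -
  assume "(a,b) \<in> Ek k"
  then consider (1) i where "a = 2*i+2" "b = 2*i" | (2) i where "a = 2*i+2" "b = 2*i+1"
    | (3) i where "a = 2*i+1" "b = 2*i"
    using arc_cases by blast
  then show ?thesis
  proof cases
    case 1
    have "(2::nat)^i \<le> 2^(2*i+1)" by (rule power_increasing) auto
    then show ?thesis using 1 by simp
  next
    case 2
    then show ?thesis by simp
  next
    case 3
    have "(2::nat)^(i+1) \<le> 2^(2*i+1)" by (rule power_increasing) auto
    then show ?thesis using 3 by simp
  qed
qed

lemma cost_lb: "is_path (Ek k) x 0 xs \<Longrightarrow> phi x \<le> path_cost wt xs"
proof (induction xs arbitrary: x)
  case Nil
  then show ?case by (simp add: is_path_def)
next
  case (Cons a xs)
  show ?case
  proof (cases xs)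
    case Nil
    with Cons.prems show ?thesis by (simp add: is_path_single phi_def)
  next
    case (Cons b r)
    with Cons.prems have h: "x = a" "(a,b) \<in> Ek k" "is_path (Ek k) b 0 (b#r)"
      by (auto simp: is_path_Cons2)
    from Cons.IH[of b] h Cons have "phi b \<le> path_cost wt (b#r)" by simp
    with arc_pot[OF h(2)] h(1) Cons show ?thesis by simp
  qed
qed

lemma cost_ub: "is_path (Ek k) x 0 xs \<Longrightarrow> path_cost wt xs \<le> 2^(x+1)"
proof (induction xs arbitrary: x)
  case Nil
  then show ?case by (simp add: is_path_def)
next
  case (Cons a xs)
  show ?case
  proof (cases xs)
    case Nil
    with Cons.prems show ?thesis by (simp add: is_path_single)
  next
    case (Cons b r)
    with Cons.prems have h: "x = a" "(a,b) \<in> Ek k" "is_path (Ek k) b 0 (b#r)"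
      by (auto simp: is_path_Cons2)
    from Cons.IH[of b] h Cons have "path_cost wt (b#r) \<le> 2^(b+1)" by simp
    with arc_ub[OF h(2)] h(1) Cons show ?thesis by simp
  qed
qed

lemma pth_props: "i \<le> k \<Longrightarrow> (\<exists>r. pth i m = 2*i # r) \<and> is_path (Ek k) (2*i) 0 (pth i m) \<and>
   (m < 2^i \<longrightarrow> path_cost wt (pth i m) = 2^i - 1 + m)"
proof (induction i arbitrary: m)
  case 0
  then show ?case by (simp add: is_path_single)
next
  case (Suc i)
  have e1: "(2*i+2, 2*i) \<in> Ek k" and e2: "(2*i+2, 2*i+1) \<in> Ek k" and e3: "(2*i+1, 2*i) \<in> Ek k"
    using Suc.prems by (auto simp: Ek_def)
  show ?case
  proof (cases "2^i \<le> m")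
    case True
    from Suc.IH[of "m - 2^i"] Suc.prems obtain r where r: "pth i (m - 2^i) = 2*i # r"
      and p: "is_path (Ek k) (2*i) 0 (pth i (m - 2^i))"
      and c: "m - 2^i < 2^i \<Longrightarrow> path_cost wt (pth i (m - 2^i)) = 2^i - 1 + (m - 2^i)" by auto
    have "m < 2^Suc i \<Longrightarrow> path_cost wt (pth (Suc i) m) = 2^Suc i - 1 + m"
      using True c r by simp
    moreover have "is_path (Ek k) (2 * Suc i) 0 (pth (Suc i) m)"
      using True p r e2 e3 by (simp add: is_path_Cons2)
    ultimately show ?thesis using True by simp
  next
    case False
    from Suc.IH[of "m"] Suc.prems obtain r where r: "pth i m = 2*i # r"
      and p: "is_path (Ek k) (2*i) 0 (pth i m)"
      and c: "m < 2^i \<Longrightarrow> path_cost wt (pth i m) = 2^i - 1 + m" by auto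
    have "m < 2^Suc i \<Longrightarrow> path_cost wt (pth (Suc i) m) = 2^Suc i - 1 + m"
      using False c r by simp
    moreover have "is_path (Ek k) (2 * Suc i) 0 (pth (Suc i) m)"
      using False p r e1 by (simp add: is_path_Cons2)
    ultimately show ?thesis using False by simp
  qed
qed

lemma shortest_even: "i \<le> k \<Longrightarrow> \<exists>r. is_path (Ek k) (2*i) 0 (2*i#r) \<and> path_cost wt (2*i#r) = phi (2*i)"
proof -
  assume ik: "i \<le> k"
  from pth_props[OF ik, of 0] obtain r where r: "pth i 0 = 2*i # r"
      "is_path (Ek k) (2*i) 0 (pth i 0)" "path_cost wt (pth i 0) = 2^i - 1" by auto
  show ?thesis apply (rule exI[of _ r]) using r by simp
qed

lemma shortest: "(v,y) \<in> Ek k \<Longrightarrow> \<exists>r. is_path (Ek k) y 0 (y#r) \<and> path_cost wt (y#r) = phi y"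
proof -
  assume "(v,y) \<in> Ek k"
  from arc_cases[OF this] consider (1) i where "y = 2*i" "i \<le> k" | (3) i where "i < k" "y = 2*i+1"
    by (elim disjE exE) auto
  then show ?thesis
  proof cases
    case 1
    then show ?thesis using shortest_even by blast
  next
    case 3
    have e3: "(Suc (2*i), 2*i) \<in> Ek k" using 3 by (auto simp: Ek_def)
    from shortest_even[of i k] 3 obtain r where r: "is_path (Ek k) (2*i) 0 (2*i#r)"
      "path_cost wt (2*i#r) = 2^i - 1" by auto
    show ?thesis
      apply (rule exI[of _ "2*i#r"])
      using r e3 3 by (simp add: is_path_Cons2)
  qed
qed

lemma perceived_Cons2: "perceived_cost w \<beta> (x#y#xs) = real (w (x,y)) + \<beta> * real (path_cost w (y#xs))"
  by (simp add: perceived_cost_def path_cost_def)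

lemma arc_perceived:
  assumes vy: "(v,y) \<in> Ek k"
  shows "\<exists>P. perceived_path (Ek k) wt (1/2) 0 v P \<and> 2 \<le> length P \<and> P!1 = y"
proof -
  obtain r where r: "is_path (Ek k) y 0 (y#r)" "path_cost wt (y#r) = phi y"
    using shortest[OF vy] by blast
  have "v \<noteq> 0" using arc_cases[OF vy] by auto
  have "perceived_cost wt (1/2) (v#y#r) \<le> perceived_cost wt (1/2) Q" if Q: "is_path (Ek k) v 0 Q" for Q
  proof -
    obtain y' r' where Qe: "Q = v # y' # r'"
      using Q \<open>v \<noteq> 0\<close> by (cases Q rule: remdups_adj.cases) (auto simp: is_path_def)
    with Q have h: "(v,y') \<in> Ek k" "is_path (Ek k) y' 0 (y'#r')" by (auto simp: is_path_Cons2)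
    have lb: "phi y' \<le> path_cost wt (y'#r')" using cost_lb[OF h(2)] .
    have cst: "2 * wt (v,y) + phi y = 2 * wt (v,y') + phi y'" using arc_const[OF vy h(1)] .
    hence "real (2 * wt (v,y) + phi y) = real (2 * wt (v,y') + phi y')" by simp
    hence cst': "2 * real (wt (v,y)) + real (phi y) = 2 * real (wt (v,y')) + real (phi y')" by simp
    have lb': "real (phi y') \<le> real (path_cost wt (y'#r'))" using lb by simp
    show ?thesis unfolding Qe perceived_Cons2 r(2) using cst' lb' by simp
  qed
  moreover have "is_path (Ek k) v 0 (v#y#r)" using r vy by (simp add: is_path_Cons2)
  ultimately show ?thesis unfolding perceived_path_def
    by (intro exI[of _ "v#y#r"]) auto
qed

lemma feas: "is_path (Ek k) s 0 xs \<Longrightarrow> feasible_path (Ek k) wt (1/2) s 0 xs"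
proof -
  assume p: "is_path (Ek k) s 0 xs"
  have "\<exists>P. perceived_path (Ek k) wt (1/2) 0 (xs ! i) P \<and> length P \<ge> 2 \<and> P ! 1 = xs ! Suc i"
    if i: "Suc i < length xs" for i
  proof -
    have "arcs xs ! i = (xs!i, xs!Suc i)" using i by (simp add: arcs_def nth_tl)
    moreover have "i < length (arcs xs)" using i by (simp add: arcs_def)
    ultimately have "(xs!i, xs!Suc i) \<in> set (arcs xs)" by (metis nth_mem)
    hence "(xs!i, xs!Suc i) \<in> Ek k" using p by (auto simp: is_path_def)
    thus ?thesis using arc_perceived by blast
  qed
  thus ?thesis using p by (simp add: feasible_path_def)
qed

lemma Ek_down: "(x,y) \<in> (Ek k)\<^sup>+ \<Longrightarrow> y < x"
proof (induction rule: trancl_induct)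
  case (base y)
  then show ?case using arc_cases by fastforce
next
  case (step y z)
  then show ?case using arc_cases[of y z k] by fastforce
qed

lemma pow_bound: "(5/4::real)^(2*k+3) \<le> 2^(k+1)"
proof (induction k)
  case 0
  then show ?case by (simp add: power3_eq_cube)
next
  case (Suc k)
  have ee: "2*Suc k+3 = (2*k+3)+2" by simp
  have "(5/4::real)^(2*Suc k+3) = (5/4)^(2*k+3) * (25/16)"
    unfolding ee power_add by (simp add: power2_eq_square)
  also have "\<dots> \<le> 2^(k+1) * 2" using Suc by (intro mult_mono) auto
  finally show ?case by simp
qed

theorem theorem1:
  shows "\<exists>c::real. c > 1 \<and> (\<forall>N::nat. \<exists>n E w s t \<beta>. n \<ge> N \<and> planning_model n E s t \<beta> \<and>
           real (card {path_cost w P | P. feasible_path E w \<beta> s t P}) \<ge> c ^ n)"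
proof (intro exI[of _ "5/4"] conjI allI)
  fix N :: nat
  define k where "k = N + 1"
  define C where "C = {path_cost wt P | P. feasible_path (Ek k) wt (1/2) (2*k) 0 P}"
  have pm: "planning_model (2*k+1) (Ek k) (2*k) 0 (1/2)"
    unfolding planning_model_def acyclic_def
    using Ek_down by (auto simp: Ek_def)
  have sub: "{2^k - 1 ..< 2^(k+1) - 1} \<subseteq> C"
  proof
    fix x assume x: "x \<in> {2^k - 1 ..< 2^(k+1) - (1::nat)}"
    define m where "m = x - (2^k - 1)"
    have "(1::nat) \<le> 2^k" by simp
    hence mx: "m < 2^k" "x = 2^k - 1 + m" using x by (auto simp: m_def)
    from pth_props[of k k m] mx obtain r where
      "is_path (Ek k) (2*k) 0 (pth k m)" "path_cost wt (pth k m) = x" by auto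
    thus "x \<in> C" unfolding C_def using feas by blast
  qed
  have fin: "finite C"
  proof (rule finite_subset)
    show "C \<subseteq> {..2^(2*k+1)}" unfolding C_def feasible_path_def using cost_ub by fastforce
  qed auto
  have "card {2^k - 1 ..< 2^(k+1) - (1::nat)} \<le> card C" using card_mono[OF fin sub] .
  hence "2^k \<le> card C" by simp
  hence "(2::real)^k \<le> real (card C)"
    by (metis numeral_power_le_of_nat_cancel_iff)
  moreover have "(5/4::real)^(2*k+1) \<le> 2^k"
  proof -
    have "2*k+1 = 2*N+3" by (simp add: k_def)
    hence "(5/4::real)^(2*k+1) = (5/4)^(2*N+3)" by (simp only:)
    moreover have "(2::real)^k = 2^(N+1)" by (simp add: k_def)
    ultimately show ?thesis using pow_bound[of N] by (simp only:)
  qed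
  ultimately have "(5/4::real)^(2*k+1) \<le> real (card C)" by linarith
  thus "\<exists>n E w s t \<beta>. n \<ge> N \<and> planning_model n E s t \<beta> \<and>
           real (card {path_cost w P | P. feasible_path E w \<beta> s t P}) \<ge> (5/4) ^ n"
    using pm unfolding C_def by (intro exI[of _ "2*k+1"] exI) (auto simp: k_def)
qed auto

end
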